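(* Let $k\geq 2$ and $n\geq 1$ be integers and let $G\in\mathcal{G}_{k,n}$. Then $G$ contains $H_k$ as a subgraph (i.e., there is an injective map $\sigma:V(H_k)\to V(G)$ sending every edge of $H_k$ to an edge of $G$) if and only if there exist $i_{\mathrm{top}},i_{\mathrm{bot}}\in[n]$ such that both $\{f_{\mathrm{top},a,i_{\mathrm{top}}},\,f_{\mathrm{bot},a,i_{\mathrm{bot}}}\}\in E(G)$ and $\{f_{\mathrm{top},b,i_{\mathrm{top}}},\,f_{\mathrm{bot},b,i_{\mathrm{bot}}}\}\in E(G)$.
   Context: Sides $S\in\{\mathrm{top},\mathrm{bot}\}$, orientations $X\in\{a,b,\mathrm{mid}\}$. Define $c(\mathrm{top},a)=6$, $c(\mathrm{top},b)=7$, $c(\mathrm{bot},a)=8$, $c(\mathrm{bot},b)=9$, and $c(S,\mathrm{mid})=10$ for both $S$. The graph $H_k$: vertices are (i) four endpoints $e_{S,P}$ for $S\in\{\mathrm{top},\mathrm{bot}\}$, $P\in\{a,b\}$; (ii) for each $s\in\{6,\dots,10\}$ a set $K_s$ of $s$ vertices forming an $s$-clique, with a distinguished vertex $\kappa_s\in K_s$; (iii) triangle vertices $t_{S,i,X}$ for $S\in\{\mathrm{top},\mathrm{bot}\}$, $i\in[k]$, $X\in\{a,b,\mathrm{mid}\}$. Edges: all edges inside each $K_s$; for each $S,i$ the three vertices $t_{S,i,a},t_{S,i,b},t_{S,i,\mathrm{mid}}$ form a triangle; $\{e_{\mathrm{top},P},e_{\mathrm{bot},P}\}$ for each $P\in\{a,b\}$;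 $\{e_{S,P},\kappa_{c(S,P)}\}$ for all $S,P$; $\{t_{S,i,X},\kappa_{c(S,X)}\}$ for all $S,i,X$; $\{\kappa_s,\kappa_{s'}\}$ for all distinct $s,s'\in\{6,\dots,10\}$; and $\{e_{S,P},t_{S,i,P}\}$ for all $S$, $P\in\{a,b\}$, $i\in[k]$. No other edges. The family $\mathcal{G}_{k,n}$: let $m=k\lceil n^{1/k}\rceil$ and fix an ordering $Q_1,\dots,Q_N$ of the $k$-element subsets of $[m]$ (note $N=\binom{m}{k}\ge n$). A graph $G$ is in $\mathcal{G}_{k,n}$ if its vertices are: endpoint copies $f_{S,P,i}$ for $S\in\{\mathrm{top},\mathrm{bot}\}$, $P\in\{a,b\}$, $i\in[n]$; triangle vertices $u_{S,j,X}$ for $S\in\{\mathrm{top},\mathrm{bot}\}$, $j\in[m]$, $X\in\{a,b,\mathrm{mid}\}$; and for each $s\in\{6,\dots,10\}$ a set $K'_s$ of $s$ vertices with a distinguished vertex $\kappa'_s\in K'_s$; and its edges are exactly: all edges inside each $K'_s$; for each $S,j$ the triangle on $u_{S,j,a},u_{S,j,b},u_{S,j,\mathrm{mid}}$; $\{f_{S,P,i},\kappa'_{c(S,P)}\}$ for all $S,P,i$; $\{u_{S,j,X},\kappa'_{c(S,X)}\}$ for all $S,j,X$; $\{\kappa'_s,\kappa'_{s'}\}$ for all distinct $s,s'$; $\{f_{S,P,i},u_{S,j,P}\}$ for all $S$, $P\in\{a,b\}$, $i\in[n]$ and $j\in Q_i$; and, for each $P\in\{a,b\}$, an arbitrary subset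 of the pairs $\{f_{\mathrm{top},P,i},f_{\mathrm{bot},P,i'}\}$, $i,i'\in[n]$. *)

theory Defs
  imports Complex_Main
begin

datatype side = Top | Bot
datatype orient = OA | OB | OMid
datatype endp = PA | PB

fun endp_orient :: "endp \<Rightarrow> orient" where
  "endp_orient PA = OA" | "endp_orient PB = OB"

fun cidx :: "side \<Rightarrow> orient \<Rightarrow> nat" where
  "cidx Top OA = 6" | "cidx Top OB = 7" | "cidx Bot OA = 8" | "cidx Bot OB = 9"
| "cidx _ OMid = 10"

definition contains_subgraph :: "('a set \<times> 'a set set) \<Rightarrow> ('b set \<times> 'b set set) \<Rightarrow> bool" where
  "contains_subgraph G H \<longleftrightarrow>
     (\<exists>\<sigma>. inj_on \<sigma> (fst H) \<and> \<sigma> ` fst H \<subseteq> fst G \<and>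
          (\<forall>x y. {x, y} \<in> snd H \<longrightarrow> {\<sigma> x, \<sigma> y} \<in> snd G))"

text \<open>HE S P = e_{S,P}; HK s x = x-th vertex of K_s (x < s), with kappa_s = HK s 0;
  HT S i X = t_{S,i,X}.\<close>
datatype hvert = HE side endp | HK nat nat | HT side nat orient

abbreviation hkappa :: "nat \<Rightarrow> hvert" where "hkappa s \<equiv> HK s 0"

definition Hverts :: "nat \<Rightarrow> hvert set" where
  "Hverts k = range (\<lambda>(S, P). HE S P)
     \<union> {HK s x | s x. s \<in> {6..10} \<and> x < s}
     \<union> {HT S i X | S i X. i \<in> {1..k}}"

definition Hedges :: "nat \<Rightarrow> hvert set set" where
  "Hedges k =
      {{HK s x, HK s y} | s x y. s \<in> {6..10} \<and> x < s \<and> y < s \<and> x \<noteq> y}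
    \<union> {{HT S i X, HT S i Y} | S i X Y. i \<in> {1..k} \<and> X \<noteq> Y}
    \<union> {{HE Top P, HE Bot P} | P. True}
    \<union> {{HE S P, hkappa (cidx S (endp_orient P))} | S P. True}
    \<union> {{HT S i X, hkappa (cidx S X)} | S i X. i \<in> {1..k}}
    \<union> {{hkappa s, hkappa s'} | s s'. s \<in> {6..10} \<and> s' \<in> {6..10} \<and> s \<noteq> s'}
    \<union> {{HE S P, HT S i (endp_orient P)} | S P i. i \<in> {1..k}}"

definition H_graph :: "nat \<Rightarrow> hvert set \<times> hvert set set" where
  "H_graph k = (Hverts k, Hedges k)"

text \<open>GF S P i = f_{S,P,i}; GU S j X = u_{S,j,X}; GK s x = x-th vertex of K'_s,
  with kappa'_s = GK s 0.\<close>
datatype gvert = GF side endp nat | GU side nat orient | GK nat nat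

abbreviation gkappa :: "nat \<Rightarrow> gvert" where "gkappa s \<equiv> GK s 0"

definition mpar :: "nat \<Rightarrow> nat \<Rightarrow> nat" where
  "mpar k n = k * nat \<lceil>root k (real n)\<rceil>"

definition is_ordering :: "nat \<Rightarrow> nat \<Rightarrow> (nat \<Rightarrow> nat set) \<Rightarrow> bool" where
  "is_ordering k n Q \<longleftrightarrow>
     bij_betw Q {1 .. mpar k n choose k} {S. S \<subseteq> {1 .. mpar k n} \<and> card S = k}"

definition Gverts :: "nat \<Rightarrow> nat \<Rightarrow> gvert set" where
  "Gverts k n = {GF S P i | S P i. i \<in> {1..n}}
     \<union> {GU S j X | S j X. j \<in> {1 .. mpar k n}}
     \<union> {GK s x | s x. s \<in> {6..10} \<and> x < s}"

definition Gedges :: "nat \<Rightarrow> nat \<Rightarrow> (nat \<Rightarrow> nat set) \<Rightarrow> (endp \<Rightarrow> (nat \<times> nat) set) \<Rightarrow> gvert set set" where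
  "Gedges k n Q R =
      {{GK s x, GK s y} | s x y. s \<in> {6..10} \<and> x < s \<and> y < s \<and> x \<noteq> y}
    \<union> {{GU S j X, GU S j Y} | S j X Y. j \<in> {1 .. mpar k n} \<and> X \<noteq> Y}
    \<union> {{GF S P i, gkappa (cidx S (endp_orient P))} | S P i. i \<in> {1..n}}
    \<union> {{GU S j X, gkappa (cidx S X)} | S j X. j \<in> {1 .. mpar k n}}
    \<union> {{gkappa s, gkappa s'} | s s'. s \<in> {6..10} \<and> s' \<in> {6..10} \<and> s \<noteq> s'}
    \<union> {{GF S P i, GU S j (endp_orient P)} | S P i j. i \<in> {1..n} \<and> j \<in> Q i}
    \<union> {{GF Top P i, GF Bot P i'} | P i i'. (i, i') \<in> R P}"

definition Gfam :: "nat \<Rightarrow> nat \<Rightarrow> (gvert set \<times> gvert set set) set" where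
  "Gfam k n = {(Gverts k n, Gedges k n Q R) | Q R.
      is_ordering k n Q \<and> (\<forall>P. R P \<subseteq> {1..n} \<times> {1..n})}"

end

theory Submission
  imports Defs
begin


fun adjG :: "nat \<Rightarrow> nat \<Rightarrow> (nat \<Rightarrow> nat set) \<Rightarrow> (endp \<Rightarrow> (nat\<times>nat) set) \<Rightarrow> gvert \<Rightarrow> gvert \<Rightarrow> bool" where
  "adjG m n Q R (GK s x) (GK s' y) = ((s = s' \<and> s \<in> {6..10} \<and> x < s \<and> y < s \<and> x \<noteq> y) \<or> (x = 0 \<and> y = 0 \<and> s \<in> {6..10} \<and> s' \<in> {6..10} \<and> s \<noteq> s'))"
| "adjG m n Q R (GU S j X) (GU S' j' Y) = (S = S' \<and> j = j' \<and> j \<in> {1..m} \<and> X \<noteq> Y)"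
| "adjG m n Q R (GF S P i) (GK s x) = (x = 0 \<and> s = cidx S (endp_orient P) \<and> i \<in> {1..n})"
| "adjG m n Q R (GK s x) (GF S P i) = (x = 0 \<and> s = cidx S (endp_orient P) \<and> i \<in> {1..n})"
| "adjG m n Q R (GU S j X) (GK s x) = (x = 0 \<and> s = cidx S X \<and> j \<in> {1..m})"
| "adjG m n Q R (GK s x) (GU S j X) = (x = 0 \<and> s = cidx S X \<and> j \<in> {1..m})"
| "adjG m n Q R (GF S P i) (GU S' j X) = (S = S' \<and> X = endp_orient P \<and> i \<in> {1..n} \<and> j \<in> Q i)"
| "adjG m n Q R (GU S' j X) (GF S P i) = (S = S' \<and> X = endp_orient P \<and> i \<in> {1..n} \<and> j \<in> Q i)"
| "adjG m n Q R (GF S P i) (GF S' P' i') = (P = P' \<and> ((S = Top \<and> S' = Bot \<and> (i, i') \<in> R P) \<or> (S = Bot \<and> S' = Top \<and> (i', i) \<in> R P)))"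

fun adjH :: "nat \<Rightarrow> hvert \<Rightarrow> hvert \<Rightarrow> bool" where
  "adjH k (HK s x) (HK s' y) = ((s = s' \<and> s \<in> {6..10} \<and> x < s \<and> y < s \<and> x \<noteq> y) \<or> (x = 0 \<and> y = 0 \<and> s \<in> {6..10} \<and> s' \<in> {6..10} \<and> s \<noteq> s'))"
| "adjH k (HT S i X) (HT S' i' Y) = (S = S' \<and> i = i' \<and> i \<in> {1..k} \<and> X \<noteq> Y)"
| "adjH k (HE S P) (HE S' P') = (P = P' \<and> S \<noteq> S')"
| "adjH k (HE S P) (HK s x) = (x = 0 \<and> s = cidx S (endp_orient P))"
| "adjH k (HK s x) (HE S P) = (x = 0 \<and> s = cidx S (endp_orient P))"
| "adjH k (HT S i X) (HK s x) = (x = 0 \<and> s = cidx S X \<and> i \<in> {1..k})"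
| "adjH k (HK s x) (HT S i X) = (x = 0 \<and> s = cidx S X \<and> i \<in> {1..k})"
| "adjH k (HE S P) (HT S' i X) = (S = S' \<and> X = endp_orient P \<and> i \<in> {1..k})"
| "adjH k (HT S' i X) (HE S P) = (S = S' \<and> X = endp_orient P \<and> i \<in> {1..k})"

lemma cidx_range: "cidx S X \<in> {6..10}"
  by (cases S; cases X) auto

lemma Gedges_iff: "{a,b} \<in> Gedges k n Q R \<longleftrightarrow> adjG (mpar k n) n Q R a b"
  apply (cases a; cases b)
  apply (auto simp: Gedges_def doubleton_eq_iff cidx_range)
  done

lemma Hedges_iff: "{a,b} \<in> Hedges k \<longleftrightarrow> adjH k a b"
  apply (cases a; cases b)
  apply (auto simp: Hedges_def doubleton_eq_iff cidx_range)
  apply (metis side.exhaust)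
  done


fun okG :: "nat \<Rightarrow> nat \<Rightarrow> gvert \<Rightarrow> bool" where
  "okG m n (GF S P i) = (i \<in> {1..n})"
| "okG m n (GU S j X) = (j \<in> {1..m})"
| "okG m n (GK s x) = (s \<in> {6..10} \<and> x < s)"

fun okH :: "nat \<Rightarrow> hvert \<Rightarrow> bool" where
  "okH k (HE S P) = True"
| "okH k (HK s x) = (s \<in> {6..10} \<and> x < s)"
| "okH k (HT S i X) = (i \<in> {1..k})"

lemma Gverts_iff: "v \<in> Gverts k n \<longleftrightarrow> okG (mpar k n) n v"
  by (cases v) (auto simp: Gverts_def)

lemma Hverts_iff: "v \<in> Hverts k \<longleftrightarrow> okH k v"
  by (cases v) (auto simp: Hverts_def)

lemma cidx_eq: "cidx S X = cidx S' Y \<longleftrightarrow> X = Y \<and> (S = S' \<or> X = OMid)"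
  by (cases S; cases X; cases S'; cases Y) auto

lemma eo_neq[simp]: "endp_orient P \<noteq> OMid" by (cases P) auto
lemma eo_eq[simp]: "endp_orient P = endp_orient P' \<longleftrightarrow> P = P'" by (cases P; cases P') auto

lemma triangle_GK:
  assumes "adjG m n Q R v a" "adjG m n Q R v b" "adjG m n Q R v c"
    "adjG m n Q R a b" "adjG m n Q R a c" "adjG m n Q R b c"
  shows "\<exists>s x. v = GK s x"
  using assms
  apply (cases v; cases a; cases b; cases c)
  apply (auto simp: cidx_eq)
  apply (metis orient.exhaust)
  done



lemma clique_same:
  fixes t y :: "nat \<Rightarrow> nat"
  assumes s6: "s \<ge> 6"
   and adjK: "\<And>x x'. x<s \<Longrightarrow> x'<s \<Longrightarrow> x\<noteq>x' \<Longrightarrow> (t x = t x') \<or> (y x = 0 \<and> y x' = 0)"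
   and inj: "\<And>x x'. x<s \<Longrightarrow> x'<s \<Longrightarrow> t x = t x' \<Longrightarrow> y x = y x' \<Longrightarrow> x = x'"
   and rng: "\<And>x. x<s \<Longrightarrow> t x \<in> {6..10::nat}"
   and pp1: "pp < s" "qq < s"
  shows "t pp = t qq"
proof (rule ccontr)
  assume ne: "t pp \<noteq> t qq"
  then have "pp \<noteq> qq" by auto
  have y0: "y pp = 0" "y qq = 0" using adjK[OF pp1 \<open>pp \<noteq> qq\<close>] ne by auto
  have yall: "y x = 0" if "x < s" for x
  proof (cases "x = pp \<or> x = qq")
    case True then show ?thesis using y0 by auto
  next
    case False
    have pp: "t x = t pp \<or> y x = 0" using adjK[OF that pp1(1)] False by auto
    have qq: "t x = t qq \<or> y x = 0" using adjK[OF that pp1(2)] False by auto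
    show ?thesis
    proof (rule ccontr)
      assume "y x \<noteq> 0"
      then have "t x = t pp" "t x = t qq" using pp qq by auto
      then show False using ne by simp
    qed
  qed
  have "inj_on t {..<s}"
    by (rule inj_onI) (use inj yall in auto)
  moreover have "t ` {..<s} \<subseteq> {6..10}" using rng by auto
  ultimately have "card {..<s} \<le> card {6..10::nat}"
    using card_inj_on_le by blast
  then show False using s6 by simp
qed

definition oth :: "endp \<Rightarrow> endp" where "oth P = (if P = PA then PB else PA)"
lemma oth_neq[simp]: "oth P \<noteq> P" "P \<noteq> oth P" by (auto simp: oth_def split: if_splits)

lemma adj_kappa:
  assumes "adjG m n Q R v (GK c 0)" "\<forall>s y. v \<noteq> GK s y"
  shows "(\<exists>S P i. v = GF S P i \<and> c = cidx S (endp_orient P) \<and> i\<in>{1..n}) \<or> (\<exists>S j X. v = GU S j X \<and> c = cidx S X \<and> j \<in> {1..m})"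
  using assms by (cases v) auto

lemma forward:
  fixes \<sigma> :: "hvert \<Rightarrow> gvert"
  assumes k1: "k \<ge> 1"
    and Qk: "\<And>i. i \<in> {1..n} \<Longrightarrow> finite (Q i) \<and> card (Q i) = k"
    and Qinj: "inj_on Q {1..n}"
    and inj: "\<And>x y. okH k x \<Longrightarrow> okH k y \<Longrightarrow> \<sigma> x = \<sigma> y \<Longrightarrow> x = y"
    and ok: "\<And>x. okH k x \<Longrightarrow> okG m n (\<sigma> x)"
    and adj: "\<And>x y. adjH k x y \<Longrightarrow> adjG m n Q R (\<sigma> x) (\<sigma> y)"
  shows "\<exists>it\<in>{1..n}. \<exists>ib\<in>{1..n}. adjG m n Q R (GF Top PA it) (GF Bot PA ib) \<and> adjG m n Q R (GF Top PB it) (GF Bot PB ib)"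
proof -
  have K4: "\<exists>t y. \<sigma> (HK s x) = GK t y" if s: "s \<in> {6..10}" "x < s" for s x
  proof -
    have "\<exists>a b c::nat. a < 4 \<and> b<4 \<and> c<4 \<and> a\<noteq>b \<and> a\<noteq>c \<and> b\<noteq>c \<and> a\<noteq>x \<and> b\<noteq>x \<and> c\<noteq>x" by presburger
    then obtain a b c :: nat where abc: "a < 4" "b<4" "c<4" "a\<noteq>b" "a\<noteq>c" "b\<noteq>c" "a\<noteq>x" "b\<noteq>x" "c\<noteq>x" by blast
    show ?thesis
      apply (rule triangle_GK[where a="\<sigma> (HK s a)" and b="\<sigma> (HK s b)" and c="\<sigma> (HK s c)"])
      apply (rule adj; use s abc in auto)+
      done
  qed
  then have "\<forall>s x. \<exists>t y. s \<in> {6..10} \<and> x < s \<longrightarrow> \<sigma> (HK s x) = GK t y" by blast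
  then obtain t y where ty: "\<And>s x. s \<in> {6..10} \<Longrightarrow> x < s \<Longrightarrow> \<sigma> (HK s x) = GK (t s x) (y s x)"
    by metis
  have okty: "t s x \<in> {6..10} \<and> y s x < t s x" if "s \<in> {6..10}" "x < s" for s x
    using ok[of "HK s x"] ty[OF that] that by auto
  have tconst: "t s x = t s 0" if s: "s \<in> {6..10}" "x < s" for s x
  proof (rule clique_same[where y="y s" and t="t s" and pp=x and qq=0])
    show "6 \<le> s" using s by auto
    show "x < s" "0 < s" using s by auto
    show "t s x' \<in> {6..10}" if "x' < s" for x' using okty s that by auto
    show "x' = x''" if "x' < s" "x'' < s" "t s x' = t s x''" "y s x' = y s x''" for x' x''
      using inj[of "HK s x'" "HK s x''"] ty[of s x'] ty[of s x''] s that by auto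
    show "t s x' = t s x'' \<or> y s x' = 0 \<and> y s x'' = 0" if "x' < s" "x'' < s" "x' \<noteq> x''" for x' x''
      using adj[of "HK s x'" "HK s x''"] ty[of s x'] ty[of s x''] s that by auto
  qed
  define T where "T s = t s 0" for s
  have yinj: "inj_on (y s) {..<s}" if s: "s \<in> {6..10}" for s
  proof (rule inj_onI)
    fix a b assume ab: "a \<in> {..<s}" "b \<in> {..<s}" "y s a = y s b"
    have "\<sigma> (HK s a) = \<sigma> (HK s b)"
      using ty[OF s, of a] ty[OF s, of b] tconst[OF s, of a] tconst[OF s, of b] ab by simp
    then show "a = b" using inj[of "HK s a" "HK s b"] s ab by simp
  qed
  have ysub: "y s ` {..<s} \<subseteq> {..<T s}" if s: "s \<in> {6..10}" for s
  proof
    fix z assume "z \<in> y s ` {..<s}"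
    then obtain a where a: "a < s" "z = y s a" by auto
    then show "z \<in> {..<T s}" using okty[OF s a(1)] tconst[OF s a(1)] unfolding T_def by simp
  qed
  have sT: "s \<le> T s" if s: "s \<in> {6..10}" for s
    using card_inj_on_le[OF yinj[OF s] ysub[OF s]] by simp
  define PP where "PP s \<longleftrightarrow> T s = s \<and> y s ` {..<s} = {..<s}" for s
  have step: "PP s" if s: "s \<in> {6..10}" and IH: "\<And>s'. s' \<in> {6..10} \<Longrightarrow> s < s' \<Longrightarrow> PP s'" for s
  proof -
    have Ts: "T s = s"
    proof (rule ccontr)
      assume "T s \<noteq> s"
      then have lt: "s < T s" using sT[OF s] by auto
      have T6: "T s \<in> {6..10}" using okty[OF s, of 0] s unfolding T_def by auto
      have P': "PP (T s)" using IH[OF T6 lt] .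
      have "y s 0 < T s" using okty[OF s, of 0] s unfolding T_def by auto
      then have "y s 0 \<in> y (T s) ` {..<T s}" using P' unfolding PP_def by simp
      then obtain z where z: "z < T s" "y (T s) z = y s 0" by (metis imageE lessThan_iff)
      have "\<sigma> (HK (T s) z) = \<sigma> (HK s 0)"
        using ty[OF T6 z(1)] ty[OF s, of 0] s tconst[OF T6 z(1)] P' z unfolding PP_def T_def by auto
      then have "HK (T s) z = HK s 0" using inj[of "HK (T s) z" "HK s 0"] T6 z s by auto
      then show False using lt by simp
    qed
    have "card (y s ` {..<s}) = s" using card_image[OF yinj[OF s]] by simp
    then have "y s ` {..<s} = {..<s}"
      using card_subset_eq[of "{..<s}" "y s ` {..<s}"] ysub[OF s] Ts by auto
    then show ?thesis using Ts unfolding PP_def by auto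
  qed
  have P10: "PP 10" by (rule step) auto
  have P9: "PP 9"
  proof (rule step)
    show "(9::nat) \<in> {6..10}" by simp
    fix s' :: nat assume "s' \<in> {6..10}" "9 < s'"
    then have "s' = 10" by auto
    then show "PP s'" using P10 by auto
  qed
  have P8: "PP 8"
  proof (rule step)
    show "(8::nat) \<in> {6..10}" by simp
    fix s' :: nat assume "s' \<in> {6..10}" "8 < s'"
    then have "s' = 9 \<or> s' = 10" by auto
    then show "PP s'" using P10 P9 by auto
  qed
  have P7: "PP 7"
  proof (rule step)
    show "(7::nat) \<in> {6..10}" by simp
    fix s' :: nat assume "s' \<in> {6..10}" "7 < s'"
    then have "s' = 8 \<or> s' = 9 \<or> s' = 10" by auto
    then show "PP s'" using P10 P9 P8 by auto
  qed
  have P6: "PP 6"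
  proof (rule step)
    show "(6::nat) \<in> {6..10}" by simp
    fix s' :: nat assume "s' \<in> {6..10}" "6 < s'"
    then have "s' = 7 \<or> s' = 8 \<or> s' = 9 \<or> s' = 10" by auto
    then show "PP s'" using P10 P9 P8 P7 by auto
  qed
  have PPall: "PP s" if "s \<in> {6..10}" for s
  proof -
    have "s = 6 \<or> s = 7 \<or> s = 8 \<or> s = 9 \<or> s = 10" using that by auto
    then show ?thesis using P6 P7 P8 P9 P10 by auto
  qed
  have noGK: "\<sigma> v \<noteq> GK s x" if v: "okH k v" "\<forall>s x. v \<noteq> HK s x" for v s x
  proof
    assume e: "\<sigma> v = GK s x"
    then have sx: "s \<in> {6..10}" "x < s" using ok[OF v(1)] by auto
    then have "x \<in> y s ` {..<s}" using PPall[OF sx(1)] unfolding PP_def by simp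
    then obtain z where z: "z < s" "y s z = x" by (metis imageE lessThan_iff)
    have "\<sigma> (HK s z) = GK s x" using ty[OF sx(1) z(1)] tconst[OF sx(1) z(1)] PPall[OF sx(1)] z
      unfolding PP_def T_def by auto
    then have "v = HK s z" using inj[of v "HK s z"] v e sx z by auto
    then show False using v by auto
  qed
  have kap: "\<sigma> (HK s 0) = GK s 0" if s: "s \<in> {6..10}" for s
  proof -
    define s' where "s' = (if s = 6 then 7 else (6::nat))"
    have s': "s' \<in> {6..10}" "s' \<noteq> s" unfolding s'_def using s by auto
    have g1: "\<sigma> (HK s 0) = GK s (y s 0)" using ty[OF s, of 0] PPall[OF s] s unfolding PP_def T_def by simp
    have g2: "\<sigma> (HK s' 0) = GK s' (y s' 0)" using ty[OF s'(1), of 0] PPall[OF s'(1)] s' unfolding PP_def T_def by simp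
    have "adjH k (HK s 0) (HK s' 0)" using s s' by simp
    from adj[OF this] have "adjG m n Q R (GK s (y s 0)) (GK s' (y s' 0))" unfolding g1 g2 .
    then have "y s 0 = 0" using s' by auto
    then show ?thesis using g1 by simp
  qed
  have HEcls: "(\<exists>i\<in>{1..n}. \<sigma> (HE S P) = GF S P i) \<or> (\<exists>j. \<sigma> (HE S P) = GU S j (endp_orient P))" for S P
  proof -
    have "adjG m n Q R (\<sigma> (HE S P)) (GK (cidx S (endp_orient P)) 0)"
      using adj[of "HE S P" "HK (cidx S (endp_orient P)) 0"] kap[OF cidx_range] by auto
    from adj_kappa[OF this] noGK[of "HE S P"] show ?thesis by (auto simp: cidx_eq)
  qed
  have HTcls: "(\<exists>P' i'. \<sigma> (HT S i (endp_orient P)) = GF S P' i' \<and> P' = P) \<or> (\<exists>j. \<sigma> (HT S i (endp_orient P)) = GU S j (endp_orient P))"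
    if i: "i \<in> {1..k}" for S P i
  proof -
    have "adjG m n Q R (\<sigma> (HT S i (endp_orient P))) (GK (cidx S (endp_orient P)) 0)"
      using adj[of "HT S i (endp_orient P)" "HK (cidx S (endp_orient P)) 0"] kap[OF cidx_range] i by auto
    from adj_kappa[OF this] noGK[of "HT S i (endp_orient P)"] i show ?thesis by (auto simp: cidx_eq)
  qed
  have HEGF: "\<exists>i\<in>{1..n}. \<sigma> (HE S P) = GF S P i" for S P
  proof (rule ccontr)
    assume "\<not> ?thesis"
    then obtain j where j: "\<sigma> (HE S P) = GU S j (endp_orient P)" using HEcls[of S P] by auto
    have k1': "1 \<in> {1..k}" using k1 by auto
    have a1: "adjG m n Q R (GU S j (endp_orient P)) (\<sigma> (HT S 1 (endp_orient P)))"
      using adj[of "HE S P" "HT S 1 (endp_orient P)"] j k1' by auto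
    then obtain i' where i': "\<sigma> (HT S 1 (endp_orient P)) = GF S P i'"
      using HTcls[OF k1', of S P] by auto
    have a2: "adjG m n Q R (GF S P i') (\<sigma> (HT S 1 (endp_orient (oth P))))"
      using adj[of "HT S 1 (endp_orient P)" "HT S 1 (endp_orient (oth P))"] i' k1' by auto
    show False using HTcls[OF k1', of S "oth P"] a2 by auto
  qed
  then have "\<forall>S P. \<exists>i. i\<in>{1..n} \<and> \<sigma> (HE S P) = GF S P i" by blast
  then obtain ix where ix: "\<And>S P. ix S P \<in> {1..n}" "\<And>S P. \<sigma> (HE S P) = GF S P (ix S P)" by metis
  have HTGU: "\<exists>j. \<sigma> (HT S i (endp_orient P)) = GU S j (endp_orient P) \<and> j \<in> Q (ix S P)"
    if i: "i \<in> {1..k}" for S P i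
  proof -
    have a: "adjG m n Q R (GF S P (ix S P)) (\<sigma> (HT S i (endp_orient P)))"
      using adj[of "HE S P" "HT S i (endp_orient P)"] ix i by auto
    then show ?thesis using HTcls[OF i, of S P] by auto
  qed
  then have "\<forall>S P i. \<exists>j. i \<in> {1..k} \<longrightarrow> \<sigma> (HT S i (endp_orient P)) = GU S j (endp_orient P) \<and> j \<in> Q (ix S P)"
    by blast
  then obtain jj where jj: "\<And>S P i. i \<in> {1..k} \<Longrightarrow> \<sigma> (HT S i (endp_orient P)) = GU S (jj S P i) (endp_orient P) \<and> jj S P i \<in> Q (ix S P)"
    by metis
  have same: "ix S PA = ix S PB" for S
  proof -
    have eq: "jj S PA i = jj S PB i" if i: "i \<in> {1..k}" for i
      using adj[of "HT S i OA" "HT S i OB"] jj[OF i, of S PA] jj[OF i, of S PB] i by auto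
    have ji: "inj_on (jj S PA) {1..k}"
    proof (rule inj_onI)
      fix a b assume ab: "a \<in> {1..k}" "b \<in> {1..k}" "jj S PA a = jj S PA b"
      then show "a = b" using inj[of "HT S a OA" "HT S b OA"] jj[OF ab(1), of S PA] jj[OF ab(2), of S PA] by auto
    qed
    have c: "card (jj S PA ` {1..k}) = k" using card_image[OF ji] by simp
    have sA: "jj S PA ` {1..k} \<subseteq> Q (ix S PA)" using jj by auto
    have sB: "jj S PA ` {1..k} \<subseteq> Q (ix S PB)" using jj eq by fastforce
    have "jj S PA ` {1..k} = Q (ix S PA)" using card_subset_eq[OF _ sA] Qk[OF ix(1)] c by auto
    moreover have "jj S PA ` {1..k} = Q (ix S PB)" using card_subset_eq[OF _ sB] Qk[OF ix(1)] c by auto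
    ultimately have "Q (ix S PA) = Q (ix S PB)" by simp
    then show ?thesis using Qinj ix(1) by (auto dest: inj_onD)
  qed
  have e1: "adjG m n Q R (GF Top PA (ix Top PA)) (GF Bot PA (ix Bot PA))"
    using adj[of "HE Top PA" "HE Bot PA"] ix by auto
  have e2: "adjG m n Q R (GF Top PB (ix Top PA)) (GF Bot PB (ix Bot PA))"
    using adj[of "HE Top PB" "HE Bot PB"] ix same by auto
  show ?thesis using e1 e2 ix(1) by blast
qed



lemma n_le_N:
  assumes k: "k \<ge> 1" and n: "n \<ge> 1"
  shows "n \<le> mpar k n choose k"
proof -
  define r where "r = root k (real n)"
  define c where "c = nat \<lceil>r\<rceil>"
  have r0: "r \<ge> 0" unfolding r_def using k by simp
  have rk: "r ^ k = real n" unfolding r_def using k by (simp add: real_root_pow_pos2)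
  have rc: "r \<le> real c" unfolding c_def by linarith
  have c1: "c \<ge> 1"
  proof (rule ccontr)
    assume "\<not> c \<ge> 1" then have "c = 0" by simp
    then have "r \<le> 0" using rc by simp
    then have "r = 0" using r0 by simp
    then show False using rk n k by (simp add: power_0_left)
  qed
  have "r ^ k \<le> real c ^ k" by (rule power_mono[OF rc r0])
  then have "real n \<le> real c ^ k" using rk by linarith
  also have "real c ^ k = (real (k*c) / real k) ^ k" using k by simp
  also have "\<dots> \<le> real (k*c choose k)" by (rule binomial_ge_n_over_k_pow_k) (use c1 in simp)
  finally show ?thesis unfolding mpar_def c_def r_def by simp
qed

theorem lemma1:
  fixes k n :: nat and G :: "gvert set \<times> gvert set set"
  assumes "k \<ge> 2" and "n \<ge> 1" and "G \<in> Gfam k n"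
  shows "contains_subgraph G (H_graph k) \<longleftrightarrow>
    (\<exists>it \<in> {1..n}. \<exists>ib \<in> {1..n}.
       {GF Top PA it, GF Bot PA ib} \<in> snd G \<and> {GF Top PB it, GF Bot PB ib} \<in> snd G)"
proof -
  obtain Q R where G: "G = (Gverts k n, Gedges k n Q R)" and ord: "is_ordering k n Q"
    using assms(3) unfolding Gfam_def by blast
  define m where "m = mpar k n"
  have k1: "k \<ge> 1" using assms(1) by simp
  have nN: "n \<le> m choose k" unfolding m_def using n_le_N[OF k1 assms(2)] .
  have bij: "bij_betw Q {1 .. m choose k} {S. S \<subseteq> {1 .. m} \<and> card S = k}"
    using ord unfolding is_ordering_def m_def .
  have Qk: "Q i \<subseteq> {1..m} \<and> card (Q i) = k" if "i \<in> {1..n}" for i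
  proof -
    have "i \<in> {1 .. m choose k}" using that nN by auto
    from bij_betw_apply[OF bij this] show ?thesis by simp
  qed
  have Qfin: "finite (Q i)" if "i \<in> {1..n}" for i
    using Qk[OF that] finite_subset by blast
  have Qinj: "inj_on Q {1..n}"
    using bij_betw_imp_inj_on[OF bij] inj_on_subset nN by fastforce
  have GE: "{a,b} \<in> snd G \<longleftrightarrow> adjG m n Q R a b" for a b
    using Gedges_iff G unfolding m_def by simp
  show ?thesis
  proof
    assume "contains_subgraph G (H_graph k)"
    then obtain \<sigma> where inj0: "inj_on \<sigma> (Hverts k)" and im: "\<sigma> ` Hverts k \<subseteq> Gverts k n"
      and ed: "\<And>x y. {x, y} \<in> Hedges k \<Longrightarrow> {\<sigma> x, \<sigma> y} \<in> Gedges k n Q R"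
      unfolding contains_subgraph_def H_graph_def G by auto
    have "\<exists>it\<in>{1..n}. \<exists>ib\<in>{1..n}. adjG m n Q R (GF Top PA it) (GF Bot PA ib) \<and> adjG m n Q R (GF Top PB it) (GF Bot PB ib)"
    proof (rule forward[OF k1])
      show "\<And>i. i \<in> {1..n} \<Longrightarrow> finite (Q i) \<and> card (Q i) = k" using Qk Qfin by blast
      show "inj_on Q {1..n}" by (rule Qinj)
      show "x = y" if "okH k x" "okH k y" "\<sigma> x = \<sigma> y" for x y
        using inj0 that unfolding Hverts_iff[symmetric] by (auto dest: inj_onD)
      show "okG m n (\<sigma> x)" if "okH k x" for x
        using im that unfolding Hverts_iff[symmetric] m_def Gverts_iff[symmetric] by auto
      show "adjG m n Q R (\<sigma> x) (\<sigma> y)" if "adjH k x y" for x y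
        using ed[of x y] that unfolding Hedges_iff Gedges_iff m_def by simp
    qed
    then show "\<exists>it \<in> {1..n}. \<exists>ib \<in> {1..n}.
       {GF Top PA it, GF Bot PA ib} \<in> snd G \<and> {GF Top PB it, GF Bot PB ib} \<in> snd G"
      unfolding GE .
  next
    assume "\<exists>it \<in> {1..n}. \<exists>ib \<in> {1..n}.
       {GF Top PA it, GF Bot PA ib} \<in> snd G \<and> {GF Top PB it, GF Bot PB ib} \<in> snd G"
    then obtain it ib where itb: "it \<in> {1..n}" "ib \<in> {1..n}"
      and eA: "adjG m n Q R (GF Top PA it) (GF Bot PA ib)" and eB: "adjG m n Q R (GF Top PB it) (GF Bot PB ib)"
      unfolding GE by blast
    define iS where "iS S = (if S = Top then it else ib)" for S
    have iS: "iS S \<in> {1..n}" for S using itb unfolding iS_def by auto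
    have hex: "\<exists>h. bij_betw h {1..k} (Q (iS S))" for S
    proof -
      obtain h where "bij_betw h {1 .. card (Q (iS S))} (Q (iS S))"
        using ex_bij_betw_nat_finite_1[OF Qfin[OF iS[of S]]] by blast
      then show ?thesis using Qk[OF iS[of S]] by auto
    qed
    have "\<exists>h. \<forall>S. bij_betw (h S) {1..k} (Q (iS S))"
      by (rule choice) (use hex in blast)
    then obtain h where h: "\<And>S. bij_betw (h S) {1..k} (Q (iS S))" by blast
    have hQ: "h S i \<in> Q (iS S)" if "i \<in> {1..k}" for S i using bij_betw_apply[OF h that] .
    have hm: "h S i \<in> {1..m}" if "i \<in> {1..k}" for S i using hQ[OF that] Qk[OF iS[of S]] by blast
    have iSlo: "Suc 0 \<le> iS S" "iS S \<le> n" for S using iS[of S] by auto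
    have hmlo: "Suc 0 \<le> h S i" "h S i \<le> m" if "Suc 0 \<le> i" "i \<le> k" for S i using hm[of i S] that by auto
    have hinj: "i = i'" if "i \<in> {1..k}" "i' \<in> {1..k}" "h S i = h S i'" for S i i'
      using bij_betw_imp_inj_on[OF h[of S]] that by (auto dest: inj_onD)
    define \<sigma> where "\<sigma> v = (case v of HE S P \<Rightarrow> GF S P (iS S) | HK s x \<Rightarrow> GK s x
      | HT S i X \<Rightarrow> GU S (h S i) X)" for v
    have RA: "(it, ib) \<in> R PA" using eA by (simp only: adjG.simps) blast
    have RB: "(it, ib) \<in> R PB" using eB by (simp only: adjG.simps) blast
    have eR: "adjG m n Q R (GF S P (iS S)) (GF S' P (iS S'))" if "S \<noteq> S'" for S S' P
      using that RA RB by (cases S; cases S'; cases P) (simp_all only: iS_def adjG.simps side.simps endp.simps if_True if_False simp_thms)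
    have htinj: "i = i'" if "i \<in> {1..k}" "i' \<in> {1..k}" "GU S (h S i) X = GU S' (h S' i') X'" for S S' i i' X X'
    proof -
      have "h S i = h S i'" using that(3) by auto
      then show ?thesis by (rule hinj[OF that(1,2)])
    qed
    have sE[simp]: "\<sigma> (HE S P) = GF S P (iS S)" for S P by (simp add: \<sigma>_def)
    have sK[simp]: "\<sigma> (HK s x) = GK s x" for s x by (simp add: \<sigma>_def)
    have sT[simp]: "\<sigma> (HT S i X) = GU S (h S i) X" for S i X by (simp add: \<sigma>_def)
    have inj: "inj_on \<sigma> (Hverts k)"
    proof (rule inj_onI)
      fix x y assume "x \<in> Hverts k" "y \<in> Hverts k" "\<sigma> x = \<sigma> y"
      then show "x = y" unfolding Hverts_iff
        by (cases x; cases y) (auto intro: hinj)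
    qed
    have im: "\<sigma> ` Hverts k \<subseteq> Gverts k n"
    proof
      fix v assume "v \<in> \<sigma> ` Hverts k"
      then obtain x where x: "okH k x" "v = \<sigma> x" using Hverts_iff by blast
      then show "v \<in> Gverts k n" unfolding Gverts_iff m_def[symmetric]
        by (cases x) (simp_all add: iSlo hmlo)
    qed
    have ed': "adjG m n Q R (\<sigma> x) (\<sigma> y)" if a: "adjH k x y" for x y
    proof (cases x)
      case (HE S P)
      show ?thesis
      proof (cases y)
        case (HE S' P')
        then have "P = P'" "S \<noteq> S'" using a \<open>x = HE S P\<close> by auto
        then show ?thesis using eR[of S S' P] \<open>x = HE S P\<close> HE by simp
      qed (use a HE in \<open>auto simp: iSlo hQ\<close>)
    next
      case (HK s z)
      then show ?thesis using a by (cases y) (auto simp: iSlo hmlo)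
    next
      case (HT S i X)
      then show ?thesis using a by (cases y) (auto simp: iSlo hmlo hQ)
    qed
    have ed: "{\<sigma> x, \<sigma> y} \<in> Gedges k n Q R" if "{x, y} \<in> Hedges k" for x y
    proof -
      have a: "adjH k x y" using that Hedges_iff by auto
      show ?thesis using ed'[OF a] unfolding Gedges_iff m_def .
    qed
    show "contains_subgraph G (H_graph k)"
      unfolding contains_subgraph_def H_graph_def G using inj im ed by auto
  qed
qed

end
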